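(* Let $\mathcal G$ be a finite connected groupoid and $\alpha=(S_g,\alpha_g)_{g\in\mathcal G}$ a unital group-type partial action of $\mathcal G$ on a ring $S=\bigoplus_{y\in\mathcal G_0}S_y$, with $S_g=S1_g$. Let $\mathcal H$ be a subgroupoid of $\mathcal G$ such that the restricted partial action $\alpha_{\mathcal H}$ is group-type, let $\mathcal H=\mathcal H_1\,\dot\cup\cdots\dot\cup\,\mathcal H_r$ be its decomposition into connected components with object sets $Y_1,\dots,Y_r$ (so $\mathcal H_0=Y_1\,\dot\cup\cdots\dot\cup\,Y_r$), let $S_j=\bigoplus_{y\in Y_j}S_y$, $S^c_{\mathcal H}=\bigoplus_{y\in\mathcal G_0\setminus\mathcal H_0}S_y$, and choose $y_j\in Y_j$ for each $j$. Then $$S^{\alpha_{\mathcal H}}=\Big(\bigoplus_{j=1}^r S_j^{\alpha_{\mathcal H_j}}\Big)\oplus S^c_{\mathcal H}\;\simeq\;\Big(\bigoplus_{j=1}^r S_{y_j}^{\alpha_{\mathcal H_j(y_j)}}\Big)\oplus S^c_{\mathcal H}.$$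
   Context: A groupoid is a small category with all morphisms invertible; $\mathcal G_0$ is the set of objects (identified with identity morphisms), $s(g),t(g)$ source and target, $\mathcal G(x,y)=\{g:s(g)=x,t(g)=y\}$, $\mathcal G(x)=\mathcal G(x,x)$; $gh$ is defined iff $s(g)=t(h)$; connected means all $\mathcal G(x,y)\ne\emptyset$; connected components are the full subgroupoids on classes of $x\sim y\iff\mathcal G(x,y)\ne\emptyset$. A partial action $\alpha=(S_g,\alpha_g)_{g\in\mathcal G}$ on a ring $S$: for each $g$, $S_{t(g)}$ is an ideal of $S$, $S_g$ an ideal of $S_{t(g)}$, $\alpha_g:S_{g^{-1}}\to S_g$ a ring isomorphism; $\alpha_x=\mathrm{id}_{S_x}$ for $x\in\mathcal G_0$; for composable $(g,h)$, $\alpha_h^{-1}(S_{g^{-1}}\cap S_h)\subseteq S_{(gh)^{-1}}$ and $\alpha_g\alpha_h(a)=\alpha_{gh}(a)$ there. Unital: $S_g=S1_g$, $1_g$ central idempotent. A transversal for $x$ in a connected groupoid $\mathcal K$ is $\{\tau_y\}_{y\in\mathcal K_0}$, $\tau_y\in\mathcal K(x,y)$, $\tau_x=x$; a partial action of connected $\mathcal K$ on $A=\bigoplus_{y\in\mathcal K_0}A_y$ is group-type if some $x$ and transversal satisfy $A_{\tau_y^{-1}}=A_x$, $A_{\tau_y}=A_y$ for all $y$; a partial action of a non-connected groupoid on such a direct sum is group-type if its restriction to each connected component $\mathcal K_Y$, acting on $\bigoplus_{y\in Y}A_y$, is group-type. For a subgroupoid $\mathcal H$, $\alpha_{\mathcal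 H}=(S_h,\alpha_h)_{h\in\mathcal H}$ is the restricted partial action on $\bigoplus_{z\in\mathcal H_0}S_z$, and $\alpha_{\mathcal H_j}$, $\alpha_{\mathcal H_j(y_j)}$ are the restrictions to $\mathcal H_j$ (on $S_j$) and to $\mathcal H_j(y_j)$ (on $S_{y_j}$). For a subgroupoid $\mathcal K$ and a subring $A\subseteq S$, $A^{\alpha_{\mathcal K}}=\{a\in A:\alpha_k(a1_{k^{-1}})=a1_k\ \forall k\in\mathcal K\}$; in particular $S^{\alpha_{\mathcal H}}$ consists of elements of all of $S$. *)

theory Defs
  imports Main
begin

text \<open>A groupoid given by its set of morphisms, source, target, partial composition
  and inversion.  Objects are identified with identity morphisms.\<close>

record 'g groupoid =
  mor :: "'g set"
  src :: "'g \<Rightarrow> 'g"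
  tgt :: "'g \<Rightarrow> 'g"
  cmp :: "'g \<Rightarrow> 'g \<Rightarrow> 'g"
  gin :: "'g \<Rightarrow> 'g"

definition objs :: "('g, 'b) groupoid_scheme \<Rightarrow> 'g set" where
  "objs G = src G ` mor G"

definition is_groupoid :: "('g, 'b) groupoid_scheme \<Rightarrow> bool" where
  "is_groupoid G \<longleftrightarrow>
     (\<forall>g\<in>mor G. src G g \<in> mor G \<and> tgt G g \<in> mor G)
   \<and> (\<forall>x\<in>objs G. src G x = x \<and> tgt G x = x)
   \<and> (\<forall>g\<in>mor G. tgt G g \<in> objs G)
   \<and> (\<forall>g\<in>mor G. \<forall>h\<in>mor G. src G g = tgt G h \<longrightarrow>
        cmp G g h \<in> mor G \<and> src G (cmp G g h) = src G h \<and> tgt G (cmp G g h) = tgt G g)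
   \<and> (\<forall>f\<in>mor G. \<forall>g\<in>mor G. \<forall>h\<in>mor G. src G f = tgt G g \<longrightarrow> src G g = tgt G h \<longrightarrow>
        cmp G (cmp G f g) h = cmp G f (cmp G g h))
   \<and> (\<forall>g\<in>mor G. cmp G (tgt G g) g = g \<and> cmp G g (src G g) = g)
   \<and> (\<forall>g\<in>mor G. gin G g \<in> mor G \<and> src G (gin G g) = tgt G g \<and> tgt G (gin G g) = src G g
        \<and> cmp G g (gin G g) = tgt G g \<and> cmp G (gin G g) g = src G g)"

definition homs :: "('g, 'b) groupoid_scheme \<Rightarrow> 'g set \<Rightarrow> 'g \<Rightarrow> 'g \<Rightarrow> 'g set" where
  "homs G K x y = {g \<in> K. src G g = x \<and> tgt G g = y}"

definition connected_groupoid :: "('g, 'b) groupoid_scheme \<Rightarrow> bool" where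
  "connected_groupoid G \<longleftrightarrow> (\<forall>x\<in>objs G. \<forall>y\<in>objs G. homs G (mor G) x y \<noteq> {})"

definition subgroupoid :: "'g set \<Rightarrow> ('g, 'b) groupoid_scheme \<Rightarrow> bool" where
  "subgroupoid H G \<longleftrightarrow> H \<subseteq> mor G
     \<and> (\<forall>h\<in>H. src G h \<in> H \<and> tgt G h \<in> H \<and> gin G h \<in> H)
     \<and> (\<forall>g\<in>H. \<forall>h\<in>H. src G g = tgt G h \<longrightarrow> cmp G g h \<in> H)"

definition sobjs :: "('g, 'b) groupoid_scheme \<Rightarrow> 'g set \<Rightarrow> 'g set" where
  "sobjs G H = src G ` H"

definition component_objs :: "('g, 'b) groupoid_scheme \<Rightarrow> 'g set \<Rightarrow> 'g set set" where
  "component_objs G H = (\<lambda>x. {y \<in> sobjs G H. homs G H x y \<noteq> {}}) ` sobjs G H"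

definition component :: "('g, 'b) groupoid_scheme \<Rightarrow> 'g set \<Rightarrow> 'g set \<Rightarrow> 'g set" where
  "component G H Y = {h \<in> H. src G h \<in> Y \<and> tgt G h \<in> Y}"

definition ideal_of :: "('g \<Rightarrow> 'a::ring) \<Rightarrow> 'g \<Rightarrow> 'a set" where
  "ideal_of e g = {a * e g | a. True}"

definition dsum :: "'i set \<Rightarrow> ('i \<Rightarrow> 'a::ring set) \<Rightarrow> 'a set" where
  "dsum I A = {(\<Sum>i\<in>I. f i) | f. \<forall>i\<in>I. f i \<in> A i}"

definition internal_direct_sum :: "'i set \<Rightarrow> ('i \<Rightarrow> 'a::ring set) \<Rightarrow> 'a set \<Rightarrow> bool" where
  "internal_direct_sum I A M \<longleftrightarrow> finite I \<and> M = dsum I A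
     \<and> (\<forall>f. (\<forall>i\<in>I. f i \<in> A i) \<and> (\<Sum>i\<in>I. f i) = 0 \<longrightarrow> (\<forall>i\<in>I. f i = 0))"

definition ring_iso_on :: "('a::ring \<Rightarrow> 'a) \<Rightarrow> 'a set \<Rightarrow> 'a set \<Rightarrow> bool" where
  "ring_iso_on f A B \<longleftrightarrow> bij_betw f A B
     \<and> (\<forall>a\<in>A. \<forall>b\<in>A. f (a + b) = f a + f b \<and> f (a * b) = f a * f b)"

text \<open>Unital partial action \<open>(S_g, \<alpha>_g)\<close> of \<open>G\<close> on the ring \<open>S\<close> (the whole type),
  with \<open>S_g = S 1_g\<close>, \<open>1_g = e g\<close> a central idempotent.\<close>
definition unital_partial_action ::
  "('g, 'b) groupoid_scheme \<Rightarrow> ('g \<Rightarrow> 'a::ring) \<Rightarrow> ('g \<Rightarrow> 'a \<Rightarrow> 'a) \<Rightarrow> bool" where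
  "unital_partial_action G e \<alpha> \<longleftrightarrow>
     (\<forall>g\<in>mor G. e g * e g = e g \<and> (\<forall>a. a * e g = e g * a))
   \<and> (\<forall>g\<in>mor G. ideal_of e g \<subseteq> ideal_of e (tgt G g))
   \<and> (\<forall>g\<in>mor G. ring_iso_on (\<alpha> g) (ideal_of e (gin G g)) (ideal_of e g))
   \<and> (\<forall>x\<in>objs G. \<forall>a\<in>ideal_of e x. \<alpha> x a = a)
   \<and> (\<forall>g\<in>mor G. \<forall>h\<in>mor G. src G g = tgt G h \<longrightarrow>
        (\<forall>a\<in>ideal_of e (gin G h). \<alpha> h a \<in> ideal_of e (gin G g) \<longrightarrow>
            a \<in> ideal_of e (gin G (cmp G g h)) \<and> \<alpha> g (\<alpha> h a) = \<alpha> (cmp G g h) a))"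

definition group_type_conn ::
  "('g, 'b) groupoid_scheme \<Rightarrow> ('g \<Rightarrow> 'a::ring) \<Rightarrow> 'g set \<Rightarrow> 'g set \<Rightarrow> bool" where
  "group_type_conn G e K K0 \<longleftrightarrow>
     (\<exists>x\<in>K0. \<exists>\<tau>. \<tau> x = x \<and>
        (\<forall>y\<in>K0. \<tau> y \<in> homs G K x y
           \<and> ideal_of e (gin G (\<tau> y)) = ideal_of e x \<and> ideal_of e (\<tau> y) = ideal_of e y))"

definition group_type_sub ::
  "('g, 'b) groupoid_scheme \<Rightarrow> ('g \<Rightarrow> 'a::ring) \<Rightarrow> 'g set \<Rightarrow> bool" where
  "group_type_sub G e H \<longleftrightarrow>
     (\<forall>Y\<in>component_objs G H. group_type_conn G e (component G H Y) Y)"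

definition invariants ::
  "('g, 'b) groupoid_scheme \<Rightarrow> ('g \<Rightarrow> 'a::ring) \<Rightarrow> ('g \<Rightarrow> 'a \<Rightarrow> 'a) \<Rightarrow> 'a set \<Rightarrow> 'g set \<Rightarrow> 'a set" where
  "invariants G e \<alpha> A K = {a \<in> A. \<forall>k\<in>K. \<alpha> k (a * e (gin G k)) = a * e k}"

end

theory Submission
  imports Defs
begin

locale pa =
  fixes G :: "('g, 'b) groupoid_scheme" and e :: "'g \<Rightarrow> 'a::ring" and \<alpha> :: "'g \<Rightarrow> 'a \<Rightarrow> 'a"
  assumes grp: "is_groupoid G" and upa: "unital_partial_action G e \<alpha>"
    and ds: "internal_direct_sum (objs G) (ideal_of e) UNIV"
begin

abbreviation "Mo \<equiv> mor G"
abbreviation "Ob \<equiv> objs G"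
abbreviation "sr \<equiv> src G"
abbreviation "tg \<equiv> tgt G"
abbreviation "cp \<equiv> cmp G"
abbreviation "iv \<equiv> gin G"
abbreviation "Sd \<equiv> ideal_of e"

lemma src_mor: "g \<in> Mo \<Longrightarrow> sr g \<in> Mo" using grp unfolding is_groupoid_def by blast
lemma tgt_mor: "g \<in> Mo \<Longrightarrow> tg g \<in> Mo" using grp unfolding is_groupoid_def by blast
lemma src_obj: "g \<in> Mo \<Longrightarrow> sr g \<in> Ob" unfolding objs_def by blast
lemma tgt_obj: "g \<in> Mo \<Longrightarrow> tg g \<in> Ob" using grp unfolding is_groupoid_def by blast
lemma obj_mor: "x \<in> Ob \<Longrightarrow> x \<in> Mo" unfolding objs_def using src_mor by blast
lemma obj_src: "x \<in> Ob \<Longrightarrow> sr x = x" using grp unfolding is_groupoid_def by blast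
lemma obj_tgt: "x \<in> Ob \<Longrightarrow> tg x = x" using grp unfolding is_groupoid_def by blast
lemma cmp_mor: "g \<in> Mo \<Longrightarrow> h \<in> Mo \<Longrightarrow> sr g = tg h \<Longrightarrow> cp g h \<in> Mo"
  using grp unfolding is_groupoid_def by blast
lemma src_cmp: "g \<in> Mo \<Longrightarrow> h \<in> Mo \<Longrightarrow> sr g = tg h \<Longrightarrow> sr (cp g h) = sr h"
  using grp unfolding is_groupoid_def by blast
lemma tgt_cmp: "g \<in> Mo \<Longrightarrow> h \<in> Mo \<Longrightarrow> sr g = tg h \<Longrightarrow> tg (cp g h) = tg g"
  using grp unfolding is_groupoid_def by blast
lemma assoc: "f \<in> Mo \<Longrightarrow> g \<in> Mo \<Longrightarrow> h \<in> Mo \<Longrightarrow> sr f = tg g \<Longrightarrow> sr g = tg h \<Longrightarrow> cp (cp f g) h = cp f (cp g h)"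
  using grp unfolding is_groupoid_def by blast
lemma cmp_tgt: "g \<in> Mo \<Longrightarrow> cp (tg g) g = g" using grp unfolding is_groupoid_def by blast
lemma cmp_src: "g \<in> Mo \<Longrightarrow> cp g (sr g) = g" using grp unfolding is_groupoid_def by blast
lemma gin_mor: "g \<in> Mo \<Longrightarrow> iv g \<in> Mo" using grp unfolding is_groupoid_def by blast
lemma src_gin: "g \<in> Mo \<Longrightarrow> sr (iv g) = tg g" using grp unfolding is_groupoid_def by blast
lemma tgt_gin: "g \<in> Mo \<Longrightarrow> tg (iv g) = sr g" using grp unfolding is_groupoid_def by blast
lemma cmp_gin_r: "g \<in> Mo \<Longrightarrow> cp g (iv g) = tg g" using grp unfolding is_groupoid_def by blast
lemma cmp_gin_l: "g \<in> Mo \<Longrightarrow> cp (iv g) g = sr g" using grp unfolding is_groupoid_def by blast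

lemma gin_gin: assumes "g \<in> Mo" shows "iv (iv g) = g"
proof -
  have "g = cp g (sr g)" using cmp_src assms by simp
  also have "\<dots> = cp g (cp (iv g) (iv (iv g)))" using cmp_gin_r[of "iv g"] gin_mor assms tgt_gin by simp
  also have "\<dots> = cp (cp g (iv g)) (iv (iv g))"
    using assoc[of g "iv g" "iv (iv g)"] gin_mor assms src_gin tgt_gin by simp
  also have "\<dots> = cp (tg g) (iv (iv g))" using cmp_gin_r assms by simp
  also have "\<dots> = iv (iv g)" using cmp_tgt[of "iv (iv g)"] gin_mor assms tgt_gin src_gin by simp
  finally show ?thesis by simp
qed

lemma gin_obj: assumes "x \<in> Ob" shows "iv x = x"
proof -
  have m: "x \<in> Mo" using obj_mor assms .
  have "iv x = cp (tg (iv x)) (iv x)" using cmp_tgt gin_mor m by simp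
  also have "\<dots> = cp x (iv x)" using tgt_gin m obj_src assms by simp
  also have "\<dots> = x" using cmp_gin_r m obj_tgt assms by simp
  finally show ?thesis .
qed

lemma cancel_l: assumes "v \<in> Mo" "h \<in> Mo" "sr v = tg h" shows "cp (iv v) (cp v h) = h"
proof -
  have "cp (iv v) (cp v h) = cp (cp (iv v) v) h"
    using assoc[of "iv v" v h] assms gin_mor src_gin by simp
  also have "\<dots> = h" using cmp_gin_l assms cmp_tgt by simp
  finally show ?thesis .
qed

lemma cancel_r: assumes "k \<in> Mo" "u \<in> Mo" "sr k = tg u" shows "cp (cp k u) (iv u) = k"
proof -
  have "cp (cp k u) (iv u) = cp k (cp u (iv u))"
    using assoc[of k u "iv u"] assms gin_mor tgt_gin by simp
  also have "\<dots> = k" using cmp_gin_r[OF assms(2)] cmp_src[OF assms(1)] assms(3) by simp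
  finally show ?thesis .
qed

lemma cancel_l2: assumes "v \<in> Mo" "m \<in> Mo" "tg v = tg m" shows "cp v (cp (iv v) m) = m"
  using cancel_l[of "iv v" m] assms gin_mor gin_gin src_gin by simp

lemma gin_cmp: assumes "g \<in> Mo" "h \<in> Mo" "sr g = tg h" shows "iv (cp g h) = cp (iv h) (iv g)"
proof -
  let ?m = "cp g h" let ?X = "cp (iv h) (iv g)"
  have mm: "?m \<in> Mo" using cmp_mor assms by simp
  have Xm: "?X \<in> Mo" using cmp_mor gin_mor assms src_gin tgt_gin by simp
  have sX: "sr ?X = tg ?m" using src_cmp gin_mor assms src_gin tgt_gin tgt_cmp by simp
  have "cp ?X ?m = cp (iv h) (cp (iv g) (cp g h))"
    using assoc[of "iv h" "iv g" ?m] gin_mor assms src_gin tgt_gin tgt_cmp cmp_mor by simp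
  also have "\<dots> = sr h" using cancel_l[of g h] assms cmp_gin_l by simp
  finally have 1: "cp ?X ?m = sr h" .
  have "iv ?m = cp (tg (iv ?m)) (iv ?m)" using cmp_tgt gin_mor mm by simp
  also have "\<dots> = cp (sr ?m) (iv ?m)" using tgt_gin mm by simp
  also have "\<dots> = cp (cp ?X ?m) (iv ?m)" using 1 src_cmp assms by simp
  also have "\<dots> = cp ?X (cp ?m (iv ?m))" using assoc[of ?X ?m "iv ?m"] Xm mm sX gin_mor tgt_gin by simp
  also have "\<dots> = ?X" using cmp_gin_r mm sX[symmetric] cmp_src Xm by simp
  finally show ?thesis .
qed


lemma e_idem: "g \<in> Mo \<Longrightarrow> e g * e g = e g" using upa unfolding unital_partial_action_def by blast
lemma e_cent: "g \<in> Mo \<Longrightarrow> a * e g = e g * a" using upa unfolding unital_partial_action_def by blast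
lemma S_tgt: "g \<in> Mo \<Longrightarrow> Sd g \<subseteq> Sd (tg g)" using upa unfolding unital_partial_action_def by blast
lemma iso: "g \<in> Mo \<Longrightarrow> ring_iso_on (\<alpha> g) (Sd (iv g)) (Sd g)" using upa unfolding unital_partial_action_def by blast
lemma al_obj: "x \<in> Ob \<Longrightarrow> a \<in> Sd x \<Longrightarrow> \<alpha> x a = a" using upa unfolding unital_partial_action_def by blast
lemma al_comp: "g \<in> Mo \<Longrightarrow> h \<in> Mo \<Longrightarrow> sr g = tg h \<Longrightarrow> a \<in> Sd (iv h) \<Longrightarrow> \<alpha> h a \<in> Sd (iv g) \<Longrightarrow>
   a \<in> Sd (iv (cp g h)) \<and> \<alpha> g (\<alpha> h a) = \<alpha> (cp g h) a"
  using upa unfolding unital_partial_action_def by blast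

lemma mem_S: assumes "g \<in> Mo" shows "(a \<in> Sd g) = (a * e g = a)"
proof
  assume "a \<in> Sd g" then obtain b where "a = b * e g" unfolding ideal_of_def by blast
  then show "a * e g = a" using e_idem[OF assms] by (simp add: mult.assoc)
next
  assume "a * e g = a" then show "a \<in> Sd g" unfolding ideal_of_def by (metis (mono_tags, lifting) mem_Collect_eq)
qed

lemma e_in: "g \<in> Mo \<Longrightarrow> e g \<in> Sd g" using mem_S e_idem by simp
lemma S_mult_r: "g \<in> Mo \<Longrightarrow> x \<in> Sd g \<Longrightarrow> x * r \<in> Sd g"
  using mem_S e_cent by (metis mult.assoc)
lemma S_mult_l: "g \<in> Mo \<Longrightarrow> x \<in> Sd g \<Longrightarrow> r * x \<in> Sd g"
  using mem_S by (metis mult.assoc)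
lemma zero_S: "g \<in> Mo \<Longrightarrow> 0 \<in> Sd g" using mem_S by simp
lemma e_tgt: "g \<in> Mo \<Longrightarrow> e g * e (tg g) = e g"
  using S_tgt e_in mem_S tgt_mor by blast
lemma S_inv_src: "g \<in> Mo \<Longrightarrow> Sd (iv g) \<subseteq> Sd (sr g)"
  using S_tgt[of "iv g"] gin_mor tgt_gin by simp
lemma S_eq_e: assumes "g \<in> Mo" "h \<in> Mo" "Sd g = Sd h" shows "e g = e h"
proof -
  have 1: "e g * e h = e g" using e_in[OF assms(1)] assms mem_S by blast
  have 2: "e h * e g = e h" using e_in[OF assms(2)] assms mem_S by blast
  show ?thesis using 1 2 e_cent[OF assms(1)] by metis
qed
lemma e_eq_S: "e g = e h \<Longrightarrow> Sd g = Sd h" unfolding ideal_of_def by simp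

lemma fin: "finite Ob" using ds unfolding internal_direct_sum_def by blast

lemma orth: assumes "x \<in> Ob" "y \<in> Ob" "x \<noteq> y" shows "e x * e y = 0"
proof -
  have xm: "x \<in> Mo" and ym: "y \<in> Mo" using assms obj_mor by auto
  let ?b = "e x * e y"
  have bx: "?b \<in> Sd x" using S_mult_r[OF xm e_in[OF xm]] .
  have "?b = e y * e x" using e_cent[OF ym] by simp
  hence bY: "?b \<in> Sd y" using S_mult_r[OF ym e_in[OF ym]] by simp
  have nb: "- ?b \<in> Sd y" using bY mem_S[OF ym] by (metis minus_mult_left)
  define f where "f = (\<lambda>i. (if i = x then ?b else 0) + (if i = y then - ?b else 0))"
  have fS: "\<forall>i\<in>Ob. f i \<in> Sd i"
    using bx nb zero_S obj_mor assms(3) unfolding f_def by auto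
  have "sum f Ob = ?b + (- ?b)" unfolding f_def sum.distrib using assms fin
    by (simp add: sum.delta)
  hence "sum f Ob = 0" by simp
  hence "f x = 0" using ds fS assms unfolding internal_direct_sum_def by blast
  thus ?thesis unfolding f_def using assms(3) by simp
qed

lemma e_orth_g: assumes "g \<in> Mo" "z \<in> Ob" "z \<noteq> tg g" shows "e g * e z = 0"
proof -
  have "e g * e z = e g * (e (tg g) * e z)" using e_tgt[OF assms(1)] by (metis mult.assoc)
  thus ?thesis using orth[of "tg g" z] assms tgt_obj by simp
qed

lemma e_obj_g: assumes "g \<in> Mo" "z \<in> Ob" shows "e z * e g = (if z = tg g then e g else 0)"
  using e_orth_g[OF assms] e_tgt[OF assms(1)] e_cent[OF obj_mor[OF assms(2)]]
  by (metis e_cent assms(1))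

lemma sum_e: assumes "Y \<subseteq> Ob" "g \<in> Mo"
  shows "(\<Sum>y\<in>Y. a * e y) * e g = (if tg g \<in> Y then a * e g else 0)"
proof -
  have fY: "finite Y" using fin assms(1) finite_subset by blast
  have "(\<Sum>y\<in>Y. a * e y) * e g = (\<Sum>y\<in>Y. a * (e y * e g))"
    by (simp add: sum_distrib_right mult.assoc)
  also have "\<dots> = (\<Sum>y\<in>Y. if y = tg g then a * e g else 0)"
    using e_obj_g assms by (intro sum.cong) auto
  also have "\<dots> = (if tg g \<in> Y then a * e g else 0)" using fY by (simp add: sum.delta')
  finally show ?thesis .
qed

lemma decomp: "a = (\<Sum>x\<in>Ob. a * e x)"
proof -
  have "a \<in> dsum Ob Sd" using ds unfolding internal_direct_sum_def by blast
  then obtain f where af: "a = sum f Ob" and fS: "\<forall>i\<in>Ob. f i \<in> Sd i" unfolding dsum_def by blast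
  have "\<forall>y\<in>Ob. a * e y = f y"
  proof
    fix y assume y: "y \<in> Ob"
    have "a * e y = (\<Sum>i\<in>Ob. f i * e i * e y)"
      unfolding af sum_distrib_right using fS mem_S obj_mor by (intro sum.cong) auto
    also have "\<dots> = (\<Sum>i\<in>Ob. if i = y then f y else 0)"
    proof (intro sum.cong refl)
      fix i assume i: "i \<in> Ob"
      show "f i * e i * e y = (if i = y then f y else 0)"
        using orth[OF i y] e_idem obj_mor i y fS mem_S by (metis mult.assoc mult_zero_right)
    qed
    also have "\<dots> = f y" using y fin by simp
    finally show "a * e y = f y" .
  qed
  thus ?thesis using af by simp
qed

lemma ext: "(\<And>z. z \<in> Ob \<Longrightarrow> a * e z = b * e z) \<Longrightarrow> a = b"
  by (metis (no_types, lifting) decomp sum.cong)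

lemma dsum_char: assumes "Y \<subseteq> Ob" shows "(a \<in> dsum Y Sd) = (\<forall>z\<in>Ob-Y. a * e z = 0)"
proof
  assume "a \<in> dsum Y Sd"
  then obtain f where af: "a = sum f Y" and fS: "\<forall>i\<in>Y. f i \<in> Sd i" unfolding dsum_def by blast
  show "\<forall>z\<in>Ob-Y. a * e z = 0"
  proof
    fix z assume z: "z \<in> Ob - Y"
    have "a * e z = (\<Sum>i\<in>Y. f i * (e i * e z))"
      unfolding af sum_distrib_right using fS mem_S obj_mor assms
      by (intro sum.cong) (auto, metis mult.assoc subsetD)
    also have "\<dots> = 0" using orth assms z by (intro sum.neutral) (metis DiffE in_mono mult_zero_right)
    finally show "a * e z = 0" .
  qed
next
  assume h: "\<forall>z\<in>Ob-Y. a * e z = 0"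
  have "a = (\<Sum>x\<in>Ob. a * e x)" by (rule decomp)
  also have "\<dots> = (\<Sum>x\<in>Y. a * e x)" using h assms fin by (intro sum.mono_neutral_right) auto
  finally have "a = (\<Sum>x\<in>Y. a * e x)" .
  moreover have "\<forall>i\<in>Y. a * e i \<in> Sd i" using assms obj_mor S_mult_l e_in by blast
  ultimately show "a \<in> dsum Y Sd" unfolding dsum_def by blast
qed

lemma vanish_g: assumes "Y \<subseteq> Ob" "a \<in> dsum Y Sd" "g \<in> Mo" "tg g \<notin> Y" shows "a * e g = 0"
proof -
  have "a * e g = (a * e (tg g)) * e g" using e_tgt[OF assms(3)] e_cent[OF assms(3)]
    by (metis mult.assoc)
  thus ?thesis using dsum_char[OF assms(1)] assms tgt_obj by simp
qed

lemma al_in: "g \<in> Mo \<Longrightarrow> x \<in> Sd (iv g) \<Longrightarrow> \<alpha> g x \<in> Sd g"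
  using iso unfolding ring_iso_on_def bij_betw_def by blast
lemma al_add: "g \<in> Mo \<Longrightarrow> x \<in> Sd (iv g) \<Longrightarrow> y \<in> Sd (iv g) \<Longrightarrow> \<alpha> g (x + y) = \<alpha> g x + \<alpha> g y"
  using iso unfolding ring_iso_on_def by blast
lemma al_mul: "g \<in> Mo \<Longrightarrow> x \<in> Sd (iv g) \<Longrightarrow> y \<in> Sd (iv g) \<Longrightarrow> \<alpha> g (x * y) = \<alpha> g x * \<alpha> g y"
  using iso unfolding ring_iso_on_def by blast
lemma al_surj: "g \<in> Mo \<Longrightarrow> y \<in> Sd g \<Longrightarrow> \<exists>x\<in>Sd (iv g). \<alpha> g x = y"
  using iso unfolding ring_iso_on_def bij_betw_def by (metis imageE)
lemma al_inj: "g \<in> Mo \<Longrightarrow> x \<in> Sd (iv g) \<Longrightarrow> y \<in> Sd (iv g) \<Longrightarrow> \<alpha> g x = \<alpha> g y \<Longrightarrow> x = y"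
  using iso unfolding ring_iso_on_def bij_betw_def inj_on_def by blast
lemma al_zero: assumes "g \<in> Mo" shows "\<alpha> g 0 = 0"
  using al_add[OF assms zero_S zero_S] gin_mor assms by simp

lemma al_inv: assumes "g \<in> Mo" "x \<in> Sd (iv g)" shows "\<alpha> (iv g) (\<alpha> g x) = x"
proof -
  have "\<alpha> g x \<in> Sd (iv (iv g))" using al_in assms gin_gin by simp
  hence "\<alpha> (iv g) (\<alpha> g x) = \<alpha> (cp (iv g) g) x"
    using al_comp[of "iv g" g x] assms gin_mor src_gin by simp
  also have "\<dots> = x" using cmp_gin_l assms al_obj src_obj S_inv_src by (metis subsetD)
  finally show ?thesis .
qed


definition glob :: "'g \<Rightarrow> bool" where
  "glob g \<longleftrightarrow> g \<in> Mo \<and> e (iv g) = e (sr g) \<and> e g = e (tg g)"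

lemma S_sub_tgt: "g \<in> Mo \<Longrightarrow> x \<in> Sd g \<Longrightarrow> x \<in> Sd (tg g)" using S_tgt by blast

lemma lglob:
  assumes gv: "glob v" and hM: "h \<in> Mo" and vh: "sr v = tg h"
  shows "e (iv (cp v h)) = e (iv h)" and "x \<in> Sd (iv h) \<Longrightarrow> \<alpha> (cp v h) x = \<alpha> v (\<alpha> h x)"
proof -
  have vM: "v \<in> Mo" and ev1: "e (iv v) = e (sr v)" and ev2: "e v = e (tg v)" using gv unfolding glob_def by auto
  let ?m = "cp v h"
  have mM: "?m \<in> Mo" using cmp_mor vM hM vh by simp
  have 1: "x \<in> Sd (iv ?m) \<and> \<alpha> v (\<alpha> h x) = \<alpha> ?m x" if x: "x \<in> Sd (iv h)" for x
  proof -
    have "\<alpha> h x \<in> Sd (tg h)" using S_sub_tgt[OF hM al_in[OF hM x]] .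
    hence "\<alpha> h x \<in> Sd (iv v)" using e_eq_S[OF ev1] vh by simp
    thus ?thesis using al_comp[OF vM hM vh x] by simp
  qed
  have 2: "x \<in> Sd (iv h)" if x: "x \<in> Sd (iv ?m)" for x
  proof -
    have "\<alpha> ?m x \<in> Sd (tg ?m)" using S_sub_tgt[OF mM al_in[OF mM x]] .
    hence "\<alpha> ?m x \<in> Sd (iv (iv v))" using e_eq_S[OF ev2] tgt_cmp[OF vM hM vh] gin_gin[OF vM] by simp
    hence "x \<in> Sd (iv (cp (iv v) ?m))"
      using al_comp[OF gin_mor[OF vM] mM _ x] src_gin[OF vM] tgt_cmp[OF vM hM vh] by simp
    thus ?thesis using cancel_l[OF vM hM vh] by simp
  qed
  have "Sd (iv ?m) = Sd (iv h)" using 1 2 by blast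
  thus "e (iv ?m) = e (iv h)" using S_eq_e gin_mor mM hM by blast
  show "x \<in> Sd (iv h) \<Longrightarrow> \<alpha> (cp v h) x = \<alpha> v (\<alpha> h x)" using 1 by simp
qed

lemma lglob_e:
  assumes gv: "glob v" and hM: "h \<in> Mo" and vh: "sr v = tg h"
  shows "\<alpha> v (e h) = e (cp v h)"
proof -
  have vM: "v \<in> Mo" and ev1: "e (iv v) = e (sr v)" using gv unfolding glob_def by auto
  let ?m = "cp v h"
  have mM: "?m \<in> Mo" using cmp_mor vM hM vh by simp
  have SS: "Sd (iv ?m) = Sd (iv h)" using lglob(1)[OF assms] e_eq_S by blast
  have Shv: "y \<in> Sd (iv v)" if "y \<in> Sd h" for y
    using S_sub_tgt[OF hM that] e_eq_S[OF ev1] vh by simp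
  obtain x0 where x0: "x0 \<in> Sd (iv h)" "\<alpha> h x0 = e h" using al_surj[OF hM e_in[OF hM]] by blast
  have a1: "\<alpha> v (e h) = \<alpha> ?m x0" using lglob(2)[OF assms x0(1)] x0(2) by simp
  have in1: "\<alpha> v (e h) \<in> Sd ?m" unfolding a1 using al_in[OF mM] x0(1) SS by simp
  obtain x1 where x1: "x1 \<in> Sd (iv ?m)" "\<alpha> ?m x1 = e ?m" using al_surj[OF mM e_in[OF mM]] by blast
  let ?r = "\<alpha> h x1"
  have r: "?r \<in> Sd h" using al_in[OF hM] x1(1) SS by simp
  have em: "e ?m = \<alpha> v ?r" using lglob(2)[OF assms] x1 SS by simp
  have "e h * ?r = ?r" using r mem_S[OF hM] e_cent[OF hM] by metis
  hence "\<alpha> v (e h) * e ?m = e ?m" unfolding em using al_mul[OF vM Shv[OF e_in[OF hM]] Shv[OF r]] by simp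
  moreover have "\<alpha> v (e h) * e ?m = \<alpha> v (e h)" using in1 mem_S[OF mM] by blast
  ultimately show ?thesis by simp
qed

lemma glob_gin: assumes "glob g" shows "glob (iv g)"
  using assms unfolding glob_def using gin_mor gin_gin src_gin tgt_gin by auto

lemma glob_obj: assumes "x \<in> Ob" shows "glob x"
  unfolding glob_def using assms obj_mor gin_obj obj_src obj_tgt by auto

lemma rglob:
  assumes gu: "glob u" and kM: "k \<in> Mo" and ku: "sr k = tg u"
    and x: "x \<in> Sd (sr u)" and xk: "\<alpha> u x \<in> Sd (iv k)"
  shows "x \<in> Sd (iv (cp k u)) \<and> \<alpha> (cp k u) x = \<alpha> k (\<alpha> u x)"
proof -
  have uM: "u \<in> Mo" and eu1: "e (iv u) = e (sr u)" using gu unfolding glob_def by auto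
  have "x \<in> Sd (iv u)" using x e_eq_S[OF eu1] by simp
  thus ?thesis using al_comp[OF kM uM ku _ xk] by simp
qed

lemma rglob_e:
  assumes gu: "glob u" and kM: "k \<in> Mo" and ku: "sr k = tg u"
  shows "e (cp k u) = e k"
proof -
  have uM: "u \<in> Mo" using gu unfolding glob_def by auto
  have "e (iv (cp (iv u) (iv k))) = e (iv (iv k))"
    using lglob(1)[OF glob_gin[OF gu] gin_mor[OF kM]] src_gin[OF uM] tgt_gin[OF kM] ku by simp
  moreover have "iv (iv (cp k u)) = cp k u" using gin_gin cmp_mor[OF kM uM ku] by simp
  ultimately show ?thesis using gin_cmp[OF kM uM ku] gin_gin[OF kM] by simp
qed

lemma glob_cmp: assumes gv: "glob v" and gh: "glob h" and vh: "sr v = tg h"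
  shows "glob (cp v h)"
proof -
  have vM: "v \<in> Mo" and hM: "h \<in> Mo" using gv gh unfolding glob_def by auto
  have 1: "e (iv (cp v h)) = e (sr (cp v h))"
    using lglob(1)[OF gv hM vh] gh src_cmp[OF vM hM vh] unfolding glob_def by simp
  have 2: "e (cp v h) = e (tg (cp v h))"
    using rglob_e[OF gh vM vh] gv tgt_cmp[OF vM hM vh] unfolding glob_def by simp
  show ?thesis using 1 2 cmp_mor[OF vM hM vh] unfolding glob_def by simp
qed


lemma core:
  assumes gu: "glob u" and gv: "glob v" and kM: "k \<in> Mo" and ku: "sr k = tg u"
    and kv: "tg k = tg v" and uv: "sr v = sr u" and b: "b \<in> Sd (sr u)"
    and inv: "\<alpha> (cp (iv v) (cp k u)) (b * e (iv (cp (iv v) (cp k u)))) = b * e (cp (iv v) (cp k u))"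
  shows "\<alpha> k (\<alpha> u b * e (iv k)) = \<alpha> v b * e k"
proof -
  have uM: "u \<in> Mo" and eu1: "e (iv u) = e (sr u)" and eu2: "e u = e (tg u)" using gu unfolding glob_def by auto
  have vM: "v \<in> Mo" and ev1: "e (iv v) = e (sr v)" and ev2: "e v = e (tg v)" using gv unfolding glob_def by auto
  define m where "m = cp k u"
  define h where "h = cp (iv v) m"
  have mM: "m \<in> Mo" unfolding m_def using cmp_mor kM uM ku by simp
  have tm: "tg m = tg v" unfolding m_def using tgt_cmp kM uM ku kv by simp
  have sm: "sr m = sr u" unfolding m_def using src_cmp kM uM ku by simp
  have hM: "h \<in> Mo" unfolding h_def using cmp_mor gin_mor vM mM src_gin tm by simp
  have th: "tg h = sr v" unfolding h_def using tgt_cmp gin_mor vM mM src_gin tm tgt_gin by simp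
  have mvh: "m = cp v h" unfolding h_def using cancel_l2[OF vM mM tm[symmetric]] by simp
  have bu: "b \<in> Sd (iv u)" using b e_eq_S[OF eu1] by simp
  define p where "p = \<alpha> u b * e (iv k)"
  have pu: "p \<in> Sd u" unfolding p_def using S_mult_r[OF uM al_in[OF uM bu]] .
  have pk: "p \<in> Sd (iv k)" unfolding p_def using S_mult_l[OF gin_mor[OF kM] e_in[OF gin_mor[OF kM]]] .
  define x where "x = \<alpha> (iv u) p"
  have puu: "p \<in> Sd (iv (iv u))" using pu gin_gin uM by simp
  have xu: "x \<in> Sd (iv u)" unfolding x_def using al_in[OF gin_mor[OF uM] puu] .
  have aux: "\<alpha> u x = p" unfolding x_def using al_inv[OF gin_mor[OF uM] puu] gin_gin[OF uM] by simp
  have xs: "x \<in> Sd (sr u)" using xu e_eq_S[OF eu1] by simp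
  have A: "x \<in> Sd (iv m) \<and> \<alpha> m x = \<alpha> k p" using rglob[OF gu kM ku xs] aux pk unfolding m_def by simp
  have B1: "e (iv m) = e (iv h)" using lglob(1)[OF gv hM th[symmetric]] mvh by simp
  have xh: "x \<in> Sd (iv h)" using A e_eq_S[OF B1] by simp
  have B2: "\<alpha> m x = \<alpha> v (\<alpha> h x)" using lglob(2)[OF gv hM th[symmetric] xh] mvh by simp
  have eiku: "e (iv k) \<in> Sd (iv (iv u))"
  proof -
    have "e (iv k) \<in> Sd (tg (iv k))" using S_sub_tgt[OF gin_mor[OF kM] e_in[OF gin_mor[OF kM]]] .
    thus ?thesis using tgt_gin[OF kM] ku gin_gin[OF uM] e_eq_S[OF eu2] by simp
  qed
  have abu: "\<alpha> u b \<in> Sd (iv (iv u))" using al_in[OF uM bu] gin_gin[OF uM] by simp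
  have "x = \<alpha> (iv u) (\<alpha> u b) * \<alpha> (iv u) (e (iv k))"
    unfolding x_def p_def using al_mul[OF gin_mor[OF uM] abu eiku] .
  also have "\<alpha> (iv u) (\<alpha> u b) = b" using al_inv[OF uM bu] .
  also have "\<alpha> (iv u) (e (iv k)) = e (cp (iv u) (iv k))"
    using lglob_e[OF glob_gin[OF gu] gin_mor[OF kM]] src_gin[OF uM] tgt_gin[OF kM] ku by simp
  also have "cp (iv u) (iv k) = iv m" unfolding m_def using gin_cmp[OF kM uM ku] by simp
  finally have xb: "x = b * e (iv h)" using B1 by simp
  have ahx: "\<alpha> h x = b * e h" using inv xb unfolding h_def m_def by simp
  have Shv: "y \<in> Sd (iv v)" if "y \<in> Sd h" for y
    using S_sub_tgt[OF hM that] e_eq_S[OF ev1] th by simp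
  have bv: "b \<in> Sd (iv v)"
  proof -
    show ?thesis using b e_eq_S[OF ev1] uv by simp
  qed
  have "\<alpha> k p = \<alpha> v (b * e h)" using A B2 ahx by simp
  also have "\<dots> = \<alpha> v b * \<alpha> v (e h)" using al_mul[OF vM bv Shv[OF e_in[OF hM]]] .
  also have "\<alpha> v (e h) = e m" using lglob_e[OF gv hM th[symmetric]] mvh by simp
  also have "e m = e k" unfolding m_def using rglob_e[OF gu kM ku] .
  finally show ?thesis unfolding p_def .
qed


lemma sumJ: assumes J: "J \<subseteq> Ob" and b: "\<forall>z\<in>J. \<beta> z \<in> Sd z" and g: "g \<in> Mo"
  shows "(\<Sum>z\<in>J. \<beta> z) * e g = (if tg g \<in> J then \<beta> (tg g) * e g else 0)"
proof -
  have fJ: "finite J" using J fin finite_subset by blast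
  have "(\<Sum>z\<in>J. \<beta> z) * e g = (\<Sum>z\<in>J. \<beta> z * e g)" by (simp add: sum_distrib_right)
  also have "\<dots> = (\<Sum>z\<in>J. if z = tg g then \<beta> (tg g) * e g else 0)"
  proof (intro sum.cong refl)
    fix z assume z: "z \<in> J"
    have zO: "z \<in> Ob" using z J by blast
    have "\<beta> z * e g = \<beta> z * (e z * e g)" using b z mem_S[OF obj_mor[OF zO]] by (metis mult.assoc)
    thus "\<beta> z * e g = (if z = tg g then \<beta> (tg g) * e g else 0)" using e_obj_g[OF g zO] by simp
  qed
  also have "\<dots> = (if tg g \<in> J then \<beta> (tg g) * e g else 0)" using fJ by (simp add: sum.delta')
  finally show ?thesis .
qed

end

locale sub = pa +
  fixes H and pick
  assumes sg: "subgroupoid H G" and gts: "group_type_sub G e H"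
    and pk: "\<forall>Y\<in>component_objs G H. pick Y \<in> Y"
begin

abbreviation "P \<equiv> sobjs G H"
abbreviation "C \<equiv> component_objs G H"
definition "cls x = {y \<in> P. homs G H x y \<noteq> {}}"

lemma H_mor: "h \<in> H \<Longrightarrow> h \<in> Mo" using sg unfolding subgroupoid_def by blast
lemma H_src: "h \<in> H \<Longrightarrow> sr h \<in> H" using sg unfolding subgroupoid_def by blast
lemma H_tgt: "h \<in> H \<Longrightarrow> tg h \<in> H" using sg unfolding subgroupoid_def by blast
lemma H_gin: "h \<in> H \<Longrightarrow> iv h \<in> H" using sg unfolding subgroupoid_def by blast
lemma H_cmp: "g \<in> H \<Longrightarrow> h \<in> H \<Longrightarrow> sr g = tg h \<Longrightarrow> cp g h \<in> H" using sg unfolding subgroupoid_def by blast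

lemma C_def': "C = cls ` P" unfolding component_objs_def cls_def by simp
lemma P_Ob: "P \<subseteq> Ob" unfolding sobjs_def using H_mor src_obj by blast
lemma P_H: "x \<in> P \<Longrightarrow> x \<in> H" unfolding sobjs_def using H_src by blast
lemma src_P: "h \<in> H \<Longrightarrow> sr h \<in> P" unfolding sobjs_def by blast
lemma tgt_P: "h \<in> H \<Longrightarrow> tg h \<in> P"
proof -
  assume h: "h \<in> H"
  have "sr (tg h) = tg h" using obj_src tgt_obj H_mor h by simp
  thus ?thesis using H_tgt[OF h] unfolding sobjs_def by (metis image_eqI)
qed
lemma finP: "finite P" using P_Ob fin finite_subset by blast
lemma finC: "finite C" using finP C_def' by simp

lemma homs_iff: "homs G H x y \<noteq> {} \<longleftrightarrow> (\<exists>h\<in>H. sr h = x \<and> tg h = y)"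
  unfolding homs_def by blast

lemma cls_refl: assumes "x \<in> P" shows "x \<in> cls x"
proof -
  have "x \<in> Ob" using assms P_Ob by blast
  hence "sr x = x" "tg x = x" using obj_src obj_tgt by auto
  thus ?thesis unfolding cls_def homs_iff using assms P_H by blast
qed

lemma cls_sym: assumes "x \<in> P" "y \<in> cls x" shows "x \<in> cls y"
proof -
  obtain h where h: "h \<in> H" "sr h = x" "tg h = y" using assms(2) unfolding cls_def homs_iff by blast
  have "iv h \<in> H" "sr (iv h) = y" "tg (iv h) = x" using H_gin H_mor src_gin tgt_gin h by auto
  thus ?thesis unfolding cls_def homs_iff using assms(1) by blast
qed

lemma cls_trans: "y \<in> cls x \<Longrightarrow> z \<in> cls y \<Longrightarrow> z \<in> cls x"
  unfolding cls_def homs_iff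
proof clarify
  fix g h assume "g \<in> H" "h \<in> H" "tg g \<in> P" "tg h \<in> P" "sr h = tg g"
  thus "\<exists>k\<in>H. sr k = sr g \<and> tg k = tg h"
    using H_cmp[of h g] H_mor src_cmp[of h g] tgt_cmp[of h g] by auto
qed

lemma cls_eq: assumes "x \<in> P" "y \<in> cls x" shows "cls y = cls x"
proof
  show "cls y \<subseteq> cls x" using cls_trans[OF assms(2)] by blast
  have "x \<in> cls y" using cls_sym assms by blast
  thus "cls x \<subseteq> cls y" using cls_trans by blast
qed

lemma cls_P: "cls x \<subseteq> P" unfolding cls_def by blast

lemma C_P: "Y \<in> C \<Longrightarrow> Y \<subseteq> P" using C_def' cls_P by blast
lemma C_Ob: "Y \<in> C \<Longrightarrow> Y \<subseteq> Ob" using C_P P_Ob by blast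
lemma C_cls: assumes "Y \<in> C" "z \<in> Y" shows "Y = cls z"
proof -
  obtain x where "x \<in> P" "Y = cls x" using assms(1) C_def' by blast
  thus ?thesis using cls_eq[of x z] assms(2) by simp
qed
lemma cls_C: "z \<in> P \<Longrightarrow> cls z \<in> C" using C_def' by blast
lemma C_disj: "Y1 \<in> C \<Longrightarrow> Y2 \<in> C \<Longrightarrow> z \<in> Y1 \<Longrightarrow> z \<in> Y2 \<Longrightarrow> Y1 = Y2"
  using C_cls by metis

lemma H_cls: assumes "k \<in> H" shows "sr k \<in> cls (sr k)" "tg k \<in> cls (sr k)"
  "k \<in> component G H (cls (sr k))"
proof -
  show 1: "sr k \<in> cls (sr k)" using cls_refl src_P assms by simp
  show 2: "tg k \<in> cls (sr k)" unfolding cls_def homs_iff using assms tgt_P by blast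
  show "k \<in> component G H (cls (sr k))" unfolding component_def using 1 2 assms by blast
qed

lemma pick_C: "Y \<in> C \<Longrightarrow> pick Y \<in> Y" using pk by blast
lemma pick_cls: "Y \<in> C \<Longrightarrow> cls (pick Y) = Y" using C_cls pick_C by metis

lemma glob_path: assumes Y: "Y \<in> C" and z: "z \<in> Y"
  shows "\<exists>u. u \<in> H \<and> sr u = pick Y \<and> tg u = z \<and> glob u"
proof -
  have "group_type_conn G e (component G H Y) Y" using gts Y unfolding group_type_sub_def by blast
  then obtain x0 \<tau> where x0: "x0 \<in> Y" and tau: "\<forall>y\<in>Y. \<tau> y \<in> homs G (component G H Y) x0 y
           \<and> Sd (iv (\<tau> y)) = Sd x0 \<and> Sd (\<tau> y) = Sd y"
    unfolding group_type_conn_def by blast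
  have tH: "\<tau> y \<in> H" "sr (\<tau> y) = x0" "tg (\<tau> y) = y" "glob (\<tau> y)" if y: "y \<in> Y" for y
  proof -
    show H: "\<tau> y \<in> H" and s: "sr (\<tau> y) = x0" and t: "tg (\<tau> y) = y"
      using tau y unfolding homs_def component_def by auto
    have yO: "y \<in> Ob" "x0 \<in> Ob" using C_Ob Y y x0 by auto
    have "e (iv (\<tau> y)) = e x0" using S_eq_e tau y gin_mor H_mor[OF H] obj_mor yO by blast
    moreover have "e (\<tau> y) = e y" using S_eq_e tau y H_mor[OF H] obj_mor yO by blast
    ultimately show "glob (\<tau> y)" unfolding glob_def using s t H_mor[OF H] by simp
  qed
  have pY: "pick Y \<in> Y" using pick_C Y by simp
  note tz = tH[OF z] and tp = tH[OF pY]
  define w where "w = iv (\<tau> (pick Y))"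
  have wH: "w \<in> H" unfolding w_def using H_gin[OF tp(1)] .
  have sw: "sr w = pick Y" unfolding w_def using src_gin[OF H_mor[OF tp(1)]] tp(3) by simp
  have tw: "tg w = x0" unfolding w_def using tgt_gin[OF H_mor[OF tp(1)]] tp(2) by simp
  have gw: "glob w" unfolding w_def using glob_gin[OF tp(4)] .
  have st: "sr (\<tau> z) = tg w" using tz(2) tw by simp
  have "cp (\<tau> z) w \<in> H" using H_cmp[OF tz(1) wH st] .
  moreover have "sr (cp (\<tau> z) w) = pick Y" using src_cmp[OF H_mor[OF tz(1)] H_mor[OF wH] st] sw by simp
  moreover have "tg (cp (\<tau> z) w) = z" using tgt_cmp[OF H_mor[OF tz(1)] H_mor[OF wH] st] tz(3) by simp
  moreover have "glob (cp (\<tau> z) w)" using glob_cmp[OF tz(4) gw st] .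
  ultimately show ?thesis by blast
qed


end

context sub begin
lemma sumC: assumes fY: "\<forall>Y\<in>C. f Y \<in> dsum Y Sd" and g: "g \<in> Mo" and Y0: "Y0 \<in> C" "tg g \<in> Y0"
  shows "(\<Sum>Y\<in>C. f Y) * e g = f Y0 * e g"
proof -
  have "(\<Sum>Y\<in>C. f Y) * e g = (\<Sum>Y\<in>C. f Y * e g)" by (simp add: sum_distrib_right)
  also have "\<dots> = f Y0 * e g + (\<Sum>Y\<in>C-{Y0}. f Y * e g)" using sum.remove[OF finC Y0(1)] by simp
  also have "(\<Sum>Y\<in>C-{Y0}. f Y * e g) = 0"
  proof (intro sum.neutral ballI)
    fix Y assume Y: "Y \<in> C - {Y0}"
    hence YC: "Y \<in> C" by blast
    have "tg g \<notin> Y" using C_disj[of Y Y0 "tg g"] Y0 Y by blast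
    thus "f Y * e g = 0" using vanish_g[OF C_Ob[OF YC] _ g] fY YC by simp
  qed
  finally show ?thesis by simp
qed

lemma sumC0: assumes fY: "\<forall>Y\<in>C. f Y \<in> dsum Y Sd" and g: "g \<in> Mo" and n: "tg g \<notin> P"
  shows "(\<Sum>Y\<in>C. f Y) * e g = 0"
proof -
  have "(\<Sum>Y\<in>C. f Y) * e g = (\<Sum>Y\<in>C. f Y * e g)" by (simp add: sum_distrib_right)
  also have "\<dots> = 0"
  proof (intro sum.neutral ballI)
    fix Y assume Y: "Y \<in> C"
    hence "tg g \<notin> Y" using C_P n by blast
    thus "f Y * e g = 0" using vanish_g[OF C_Ob[OF Y] _ g] fY Y by simp
  qed
  finally show ?thesis .
qed

lemma sumPk_gen: assumes bY: "\<forall>Y\<in>C. b Y \<in> Sd (pick Y)" and g: "g \<in> Mo"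
  shows "(\<Sum>Y\<in>C. b Y) * e g = (\<Sum>Y\<in>C. if pick Y = tg g then b Y * e g else 0)"
proof -
  have "(\<Sum>Y\<in>C. b Y) * e g = (\<Sum>Y\<in>C. b Y * e g)" by (simp add: sum_distrib_right)
  also have "\<dots> = (\<Sum>Y\<in>C. if pick Y = tg g then b Y * e g else 0)"
  proof (intro sum.cong refl)
    fix Y assume Y: "Y \<in> C"
    have pO: "pick Y \<in> Ob" using pick_C[OF Y] C_Ob[OF Y] by blast
    have "b Y * e g = b Y * (e (pick Y) * e g)"
      using bY Y mem_S[OF obj_mor[OF pO]] by (metis mult.assoc)
    also have "\<dots> = b Y * (if pick Y = tg g then e g else 0)" using e_obj_g[OF g pO] by (simp only:)
    finally show "b Y * e g = (if pick Y = tg g then b Y * e g else 0)" by (cases "pick Y = tg g") auto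
  qed
  finally show ?thesis .
qed

lemma sumPk1: assumes bY: "\<forall>Y\<in>C. b Y \<in> Sd (pick Y)" and g: "g \<in> Mo" and Y0: "Y0 \<in> C" "pick Y0 = tg g"
  shows "(\<Sum>Y\<in>C. b Y) * e g = b Y0 * e g"
proof -
  have "(\<Sum>Y\<in>C. b Y) * e g = (\<Sum>Y\<in>C. if pick Y = tg g then b Y * e g else 0)" using sumPk_gen[OF bY g] .
  also have "\<dots> = (\<Sum>Y\<in>C. if Y = Y0 then b Y * e g else 0)"
  proof (intro sum.cong refl)
    fix Y assume Y: "Y \<in> C"
    have "pick Y = tg g \<longleftrightarrow> Y = Y0"
    proof
      assume "pick Y = tg g"
      hence "pick Y \<in> Y0" using Y0 pick_C by metis
      thus "Y = Y0" using C_disj[OF Y Y0(1) pick_C[OF Y]] by simp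
    qed (use Y0 in simp)
    thus "(if pick Y = tg g then b Y * e g else 0) = (if Y = Y0 then b Y * e g else 0)" by simp
  qed
  also have "\<dots> = b Y0 * e g" using finC Y0(1) by (simp add: sum.delta')
  finally show ?thesis .
qed

lemma sumPk0: assumes bY: "\<forall>Y\<in>C. b Y \<in> Sd (pick Y)" and g: "g \<in> Mo" and n: "tg g \<notin> pick ` C"
  shows "(\<Sum>Y\<in>C. b Y) * e g = 0"
proof -
  have "(\<Sum>Y\<in>C. b Y) * e g = (\<Sum>Y\<in>C. if pick Y = tg g then b Y * e g else 0)" using sumPk_gen[OF bY g] .
  also have "\<dots> = 0"
  proof (intro sum.neutral ballI)
    fix Y assume "Y \<in> C"
    hence "pick Y \<noteq> tg g" using n by (metis image_eqI)
    thus "(if pick Y = tg g then b Y * e g else 0) = 0" by simp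
  qed
  finally show ?thesis .
qed


abbreviation "Q \<equiv> Ob - P"

lemma dsum_I: "\<forall>i\<in>I. f i \<in> A i \<Longrightarrow> sum f I \<in> dsum I A" unfolding dsum_def by blast
lemma dsum_E: "x \<in> dsum I A \<Longrightarrow> \<exists>f. x = sum f I \<and> (\<forall>i\<in>I. f i \<in> A i)" unfolding dsum_def by blast

lemma inv_iff: "a \<in> invariants G e \<alpha> A K \<longleftrightarrow> a \<in> A \<and> (\<forall>k\<in>K. \<alpha> k (a * e (iv k)) = a * e k)"
  unfolding invariants_def by simp

lemma part1: "invariants G e \<alpha> UNIV H =
  {a + c | a c. a \<in> dsum C (\<lambda>Y. invariants G e \<alpha> (dsum Y Sd) (component G H Y)) \<and> c \<in> dsum Q Sd}"
proof (intro set_eqI iffI)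
  fix a assume "a \<in> invariants G e \<alpha> UNIV H"
  hence ainv: "\<forall>k\<in>H. \<alpha> k (a * e (iv k)) = a * e k" using inv_iff by blast
  define f where "f Y = (\<Sum>y\<in>Y. a * e y)" for Y
  define c where "c = (\<Sum>x\<in>Q. a * e x)"
  have fd: "f Y \<in> dsum Y Sd" if Y: "Y \<in> C" for Y
  proof -
    have "\<forall>y\<in>Y. a * e y \<in> Sd y" using C_Ob[OF Y] obj_mor S_mult_l e_in by blast
    thus ?thesis unfolding dsum_def f_def by blast
  qed
  have fY: "\<forall>Y\<in>C. f Y \<in> invariants G e \<alpha> (dsum Y Sd) (component G H Y)"
  proof
    fix Y assume Y: "Y \<in> C"
    have "\<alpha> k (f Y * e (iv k)) = f Y * e k" if k: "k \<in> component G H Y" for k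
    proof -
      have kH: "k \<in> H" and ks: "sr k \<in> Y" and kt: "tg k \<in> Y" using k unfolding component_def by auto
      have kM: "k \<in> Mo" using H_mor[OF kH] .
      have 1: "f Y * e (iv k) = a * e (iv k)" unfolding f_def
        using sum_e[OF C_Ob[OF Y] gin_mor[OF kM]] tgt_gin[OF kM] ks by simp
      have 2: "f Y * e k = a * e k" unfolding f_def using sum_e[OF C_Ob[OF Y] kM] kt by simp
      show ?thesis using 1 2 ainv kH by simp
    qed
    thus "f Y \<in> invariants G e \<alpha> (dsum Y Sd) (component G H Y)" using inv_iff fd[OF Y] by blast
  qed
  have 1: "(\<Sum>Y\<in>C. f Y) \<in> dsum C (\<lambda>Y. invariants G e \<alpha> (dsum Y Sd) (component G H Y))"
    using dsum_I[OF fY] .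
  have 2: "c \<in> dsum Q Sd"
  proof -
    have "\<forall>y\<in>Q. a * e y \<in> Sd y" using obj_mor S_mult_l e_in by blast
    thus ?thesis unfolding dsum_def c_def by blast
  qed
  have fdC: "\<forall>Y\<in>C. f Y \<in> dsum Y Sd" using fd by blast
  have 3: "a = (\<Sum>Y\<in>C. f Y) + c"
  proof (rule ext)
    fix z assume z: "z \<in> Ob"
    have zM: "z \<in> Mo" and tz: "tg z = z" using obj_mor obj_tgt z by auto
    show "a * e z = ((\<Sum>Y\<in>C. f Y) + c) * e z"
    proof (cases "z \<in> P")
      case True
      have Y0: "cls z \<in> C" "z \<in> cls z" using cls_C cls_refl True by auto
      have "(\<Sum>Y\<in>C. f Y) * e z = f (cls z) * e z" using sumC[OF fdC zM Y0(1)] tz Y0(2) by simp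
      also have "\<dots> = a * e z" unfolding f_def using sum_e[OF C_Ob[OF Y0(1)] zM] tz Y0(2) by simp
      finally have a1: "(\<Sum>Y\<in>C. f Y) * e z = a * e z" .
      have "c * e z = 0" unfolding c_def using sum_e[of Q z a] zM tz True by simp
      thus ?thesis using a1 by (simp add: distrib_right)
    next
      case False
      have a1: "(\<Sum>Y\<in>C. f Y) * e z = 0" using sumC0[OF fdC zM] tz False by simp
      have "c * e z = a * e z" unfolding c_def using sum_e[of Q z a] zM tz False z by simp
      thus ?thesis using a1 by (simp add: distrib_right)
    qed
  qed
  show "a \<in> {a + c | a c. a \<in> dsum C (\<lambda>Y. invariants G e \<alpha> (dsum Y Sd) (component G H Y)) \<and> c \<in> dsum Q Sd}"
    using 1 2 3 by blast
next
  fix a assume "a \<in> {a + c | a c. a \<in> dsum C (\<lambda>Y. invariants G e \<alpha> (dsum Y Sd) (component G H Y)) \<and> c \<in> dsum Q Sd}"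
  then obtain a1 c where a: "a = a1 + c" and a1: "a1 \<in> dsum C (\<lambda>Y. invariants G e \<alpha> (dsum Y Sd) (component G H Y))"
    and c: "c \<in> dsum Q Sd" by blast
  obtain f where af: "a1 = (\<Sum>Y\<in>C. f Y)" and fY: "\<forall>Y\<in>C. f Y \<in> invariants G e \<alpha> (dsum Y Sd) (component G H Y)"
    using dsum_E[OF a1] by blast
  have fdC: "\<forall>Y\<in>C. f Y \<in> dsum Y Sd" using fY inv_iff by blast
  have "\<alpha> k (a * e (iv k)) = a * e k" if kH: "k \<in> H" for k
  proof -
    have kM: "k \<in> Mo" using H_mor[OF kH] .
    define Y0 where "Y0 = cls (sr k)"
    have Y0: "Y0 \<in> C" using cls_C src_P kH unfolding Y0_def by simp
    note hc = H_cls[OF kH, folded Y0_def]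
    have QO: "Q \<subseteq> Ob" by blast
    have i1: "a * e (iv k) = f Y0 * e (iv k)"
    proof -
      have "a1 * e (iv k) = f Y0 * e (iv k)" unfolding af
        using sumC[OF fdC gin_mor[OF kM] Y0] tgt_gin[OF kM] hc by simp
      moreover have "c * e (iv k) = 0" using vanish_g[OF QO c gin_mor[OF kM]] tgt_gin[OF kM] src_P[OF kH] by simp
      ultimately show ?thesis unfolding a by (simp add: distrib_right)
    qed
    have i2: "a * e k = f Y0 * e k"
    proof -
      have "a1 * e k = f Y0 * e k" unfolding af using sumC[OF fdC kM Y0] hc by simp
      moreover have "c * e k = 0" using vanish_g[OF QO c kM] tgt_P[OF kH] by simp
      ultimately show ?thesis unfolding a by (simp add: distrib_right)
    qed
    have "\<alpha> k (f Y0 * e (iv k)) = f Y0 * e k" using fY Y0 hc(3) inv_iff by blast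
    thus ?thesis using i1 i2 by simp
  qed
  thus "a \<in> invariants G e \<alpha> UNIV H" using inv_iff by blast
qed


definition "EE = (\<Sum>Y\<in>C. e (pick Y)) + (\<Sum>x\<in>Q. e x)"

lemma pick_P: "Y \<in> C \<Longrightarrow> pick Y \<in> P" using pick_C C_P by blast
lemma pick_O: "Y \<in> C \<Longrightarrow> pick Y \<in> Ob" using pick_P P_Ob by blast

lemma EE_ez: assumes z: "z \<in> Ob" shows "EE * e z = (if z \<in> pick ` C \<union> Q then e z else 0)"
proof -
  have zM: "z \<in> Mo" and tz: "tg z = z" using obj_mor obj_tgt z by auto
  have bS: "\<forall>Y\<in>C. e (pick Y) \<in> Sd (pick Y)" using e_in obj_mor pick_O by blast
  have QS: "\<forall>x\<in>Q. e x \<in> Sd x" using e_in obj_mor by blast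
  have s2: "(\<Sum>x\<in>Q. e x) * e z = (if z \<in> Q then e z else 0)"
    using sumJ[of Q e z, OF _ QS zM] tz e_idem[OF zM] by simp
  show ?thesis
  proof (cases "z \<in> pick ` C")
    case True
    then obtain Y0 where Y0: "Y0 \<in> C" "z = pick Y0" by blast
    have "(\<Sum>Y\<in>C. e (pick Y)) * e z = e z" using sumPk1[OF bS zM Y0(1)] Y0 tz e_idem[OF zM] by simp
    moreover have "z \<notin> Q" using pick_P Y0 by blast
    ultimately show ?thesis unfolding EE_def using s2 True by (simp only: distrib_right if_True if_False Un_iff simp_thms add_0_right)
  next
    case False
    have "(\<Sum>Y\<in>C. e (pick Y)) * e z = 0" using sumPk0[OF bS zM] False tz by simp
    thus ?thesis unfolding EE_def using s2 False by (simp add: distrib_right)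
  qed
qed

lemma EE_cent: "a * EE = EE * a"
proof -
  have "\<forall>Y\<in>C. a * e (pick Y) = e (pick Y) * a" using e_cent obj_mor pick_O by blast
  moreover have "\<forall>x\<in>Q. a * e x = e x * a" using e_cent obj_mor by blast
  ultimately show ?thesis unfolding EE_def
    by (simp add: distrib_left distrib_right sum_distrib_left sum_distrib_right)
qed

lemma EE_idem: "EE * EE = EE"
proof (rule ext)
  fix z assume z: "z \<in> Ob"
  show "EE * EE * e z = EE * e z" using EE_ez[OF z] by (simp add: mult.assoc)
qed

lemma EE_mult: "(a * b) * EE = (a * EE) * (b * EE)"
proof -
  have "(a * EE) * (b * EE) = a * ((EE * b) * EE)" by (simp add: mult.assoc)
  also have "\<dots> = a * (b * (EE * EE))" using EE_cent[of b] by (metis mult.assoc)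
  also have "\<dots> = (a * b) * EE" using EE_idem by (simp add: mult.assoc)
  finally show ?thesis by simp
qed


abbreviation "Inv' Y \<equiv> invariants G e \<alpha> (Sd (pick Y)) (homs G H (pick Y) (pick Y))"
abbreviation "II \<equiv> invariants G e \<alpha> UNIV H"
abbreviation "TT \<equiv> {a + c | a c. a \<in> dsum C Inv' \<and> c \<in> dsum Q Sd}"

lemma img_sub: assumes a: "a \<in> II" shows "a * EE \<in> TT"
proof -
  have ainv: "\<forall>k\<in>H. \<alpha> k (a * e (iv k)) = a * e k" using a inv_iff by blast
  have "a * EE = (\<Sum>Y\<in>C. a * e (pick Y)) + (\<Sum>x\<in>Q. a * e x)"
    unfolding EE_def by (simp add: distrib_left sum_distrib_left)
  moreover have "(\<Sum>Y\<in>C. a * e (pick Y)) \<in> dsum C Inv'"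
  proof (rule dsum_I, rule ballI)
    fix Y assume Y: "Y \<in> C"
    let ?y = "pick Y"
    have yM: "?y \<in> Mo" using obj_mor pick_O Y by blast
    have yO: "?y \<in> Ob" using pick_O Y by blast
    have "\<alpha> h (a * e ?y * e (iv h)) = a * e ?y * e h" if h: "h \<in> homs G H ?y ?y" for h
    proof -
      have hH: "h \<in> H" and hs: "sr h = ?y" and ht: "tg h = ?y" using h unfolding homs_def by auto
      have hM: "h \<in> Mo" using H_mor[OF hH] .
      have 1: "a * e ?y * e (iv h) = a * e (iv h)"
        using e_obj_g[OF gin_mor[OF hM] yO] tgt_gin[OF hM] hs by (simp add: mult.assoc)
      have 2: "a * e ?y * e h = a * e h" using e_obj_g[OF hM yO] ht by (simp add: mult.assoc)
      show ?thesis using 1 2 ainv hH by simp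
    qed
    moreover have "a * e ?y \<in> Sd ?y" using S_mult_l[OF yM e_in[OF yM]] .
    ultimately show "a * e (pick Y) \<in> Inv' Y" using inv_iff by blast
  qed
  moreover have "(\<Sum>x\<in>Q. a * e x) \<in> dsum Q Sd"
    using dsum_I[of Q "\<lambda>x. a * e x" Sd] obj_mor S_mult_l e_in by blast
  ultimately show ?thesis by blast
qed

lemma EE_comp: assumes z: "z \<in> Ob" shows "(a * EE) * e z = (if z \<in> pick ` C \<union> Q then a * e z else 0)"
  using EE_ez[OF z] by (simp add: mult.assoc)

lemma inj: "inj_on (\<lambda>a. a * EE) II"
proof (rule inj_onI)
  fix a b assume a: "a \<in> II" and b: "b \<in> II" and ab: "a * EE = b * EE"
  have key: "a * e x = b * e x" if x: "x \<in> Ob" "x \<in> pick ` C \<union> Q" for x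
    using EE_comp[OF x(1), of a] EE_comp[OF x(1), of b] ab x by simp
  show "a = b"
  proof (rule ext)
    fix z assume z: "z \<in> Ob"
    show "a * e z = b * e z"
    proof (cases "z \<in> P")
      case False thus ?thesis using key z by blast
    next
      case True
      let ?Y = "cls z"
      have Y: "?Y \<in> C" "z \<in> ?Y" using cls_C cls_refl True by auto
      obtain u where u: "u \<in> H" "sr u = pick ?Y" "tg u = z" "glob u" using glob_path[OF Y] by blast
      have uM: "u \<in> Mo" and eu1: "e (iv u) = e (pick ?Y)" and eu2: "e u = e z"
        using u unfolding glob_def by auto
      have "a * e z = \<alpha> u (a * e (pick ?Y))" using a inv_iff u(1) eu1 eu2 by metis
      moreover have "b * e z = \<alpha> u (b * e (pick ?Y))" using b inv_iff u(1) eu1 eu2 by metis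
      moreover have "a * e (pick ?Y) = b * e (pick ?Y)" using key pick_O[OF Y(1)] Y(1) by blast
      ultimately show ?thesis by simp
    qed
  qed
qed


lemma surj: assumes t: "t \<in> TT" shows "\<exists>a\<in>II. t = a * EE"
proof -
  obtain a1 c where t: "t = a1 + c" and a1: "a1 \<in> dsum C Inv'" and c: "c \<in> dsum Q Sd" using t by blast
  obtain b where ab: "a1 = (\<Sum>Y\<in>C. b Y)" and bI: "\<forall>Y\<in>C. b Y \<in> Inv' Y" using dsum_E[OF a1] by blast
  have bS: "\<forall>Y\<in>C. b Y \<in> Sd (pick Y)" using bI inv_iff by blast
  have binv: "\<alpha> h (b Y * e (iv h)) = b Y * e h" if "Y \<in> C" "h \<in> homs G H (pick Y) (pick Y)" for Y h
    using bI that inv_iff by blast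
  have QO: "Q \<subseteq> Ob" by blast
  define U where "U z = (SOME u. u \<in> H \<and> sr u = pick (cls z) \<and> tg u = z \<and> glob u)" for z
  have U: "U z \<in> H \<and> sr (U z) = pick (cls z) \<and> tg (U z) = z \<and> glob (U z)" if z: "z \<in> P" for z
  proof -
    have "\<exists>u. u \<in> H \<and> sr u = pick (cls z) \<and> tg u = z \<and> glob u"
      using glob_path[OF cls_C[OF z] cls_refl[OF z]] .
    thus ?thesis unfolding U_def by (rule someI_ex)
  qed
  define \<beta> where "\<beta> z = \<alpha> (U z) (b (cls z))" for z
  have \<beta>S: "\<beta> z \<in> Sd z" if z: "z \<in> P" for z
  proof -
    have g: "glob (U z)" and uM: "U z \<in> Mo" using U[OF z] H_mor by auto
    have "b (cls z) \<in> Sd (iv (U z))" using bS cls_C[OF z] U[OF z] g e_eq_S unfolding glob_def by metis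
    hence "\<beta> z \<in> Sd (U z)" unfolding \<beta>_def using al_in[OF uM] by simp
    thus ?thesis using g U[OF z] e_eq_S unfolding glob_def by metis
  qed
  define a where "a = (\<Sum>z\<in>P. \<beta> z) + c"
  have ae: "a * e g = (if tg g \<in> P then \<beta> (tg g) * e g else 0) + c * e g" if g: "g \<in> Mo" for g
    unfolding a_def distrib_right using sumJ[OF P_Ob _ g, of \<beta>] \<beta>S by simp
  have aI: "a \<in> II"
  proof -
    have "\<alpha> k (a * e (iv k)) = a * e k" if kH: "k \<in> H" for k
    proof -
      have kM: "k \<in> Mo" using H_mor[OF kH] .
      define z where "z = sr k"
      define w where "w = tg k"
      have zP: "z \<in> P" and wP: "w \<in> P" using src_P tgt_P kH unfolding z_def w_def by auto
      have clw: "cls w = cls z" using cls_eq[OF zP] H_cls(2)[OF kH] unfolding z_def w_def by simp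
      define Y where "Y = cls z"
      have YC: "Y \<in> C" using cls_C[OF zP] unfolding Y_def .
      note Uz = U[OF zP] and Uw = U[OF wP]
      have i1: "a * e (iv k) = \<beta> z * e (iv k)"
        using ae[OF gin_mor[OF kM]] tgt_gin[OF kM] zP vanish_g[OF QO c gin_mor[OF kM]] unfolding z_def by simp
      have i2: "a * e k = \<beta> w * e k"
        using ae[OF kM] wP vanish_g[OF QO c kM] unfolding w_def by simp
      let ?h = "cp (iv (U w)) (cp k (U z))"
      have skz: "sr k = tg (U z)" using Uz unfolding z_def by simp
      have UzM: "U z \<in> Mo" and UwM: "U w \<in> Mo" using Uz Uw H_mor by auto
      have m1: "cp k (U z) \<in> H" using H_cmp[OF kH _ skz] Uz by simp
      have s2: "sr (iv (U w)) = tg (cp k (U z))" using src_gin[OF UwM] tgt_cmp[OF kM UzM skz] Uw unfolding w_def by simp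
      have hH: "?h \<in> H" using H_cmp[OF H_gin m1 s2] Uw by simp
      have hs: "sr ?h = pick Y" using src_cmp[OF gin_mor[OF UwM] H_mor[OF m1] s2] src_cmp[OF kM UzM skz] Uz
        unfolding Y_def by simp
      have ht: "tg ?h = pick Y" using tgt_cmp[OF gin_mor[OF UwM] H_mor[OF m1] s2] tgt_gin[OF UwM] Uw clw
        unfolding Y_def by simp
      have hh: "?h \<in> homs G H (pick Y) (pick Y)" unfolding homs_def using hH hs ht by simp
      have bY: "b Y \<in> Sd (sr (U z))" using bS YC Uz unfolding Y_def by simp
      have "\<alpha> k (\<alpha> (U z) (b Y) * e (iv k)) = \<alpha> (U w) (b Y) * e k"
        using core[OF _ _ kM skz _ _ bY binv[OF YC hh]] Uz Uw clw unfolding w_def Y_def by simp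
      thus ?thesis using i1 i2 clw unfolding \<beta>_def Y_def by simp
    qed
    thus ?thesis using inv_iff by blast
  qed
  have "t = a * EE"
  proof (rule ext)
    fix z assume z: "z \<in> Ob"
    have zM: "z \<in> Mo" and tz: "tg z = z" using obj_mor obj_tgt z by auto
    have "t * e z = (\<Sum>Y\<in>C. b Y) * e z + c * e z" unfolding t ab by (simp add: distrib_right)
    show "t * e z = a * EE * e z"
    proof (cases "z \<in> pick ` C")
      case True
      then obtain Y0 where Y0: "Y0 \<in> C" "z = pick Y0" by blast
      have zP: "z \<in> P" using pick_P Y0 by simp
      have c0: "c * e z = 0" using vanish_g[OF QO c zM] tz zP by simp
      have cl: "cls z = Y0" using pick_cls Y0 by simp
      note Uz = U[OF zP]
      have eU1: "e (iv (U z)) = e z" and eU2: "e (U z) = e z" using Uz cl Y0 unfolding glob_def by auto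
      have hh: "U z \<in> homs G H (pick Y0) (pick Y0)" unfolding homs_def using Uz cl Y0 by simp
      have "b Y0 \<in> Sd z" using bS Y0 by simp
      hence bz: "b Y0 * e z = b Y0" using mem_S[OF zM] by simp
      have "\<beta> z = b Y0" unfolding \<beta>_def using binv[OF Y0(1) hh] eU1 eU2 bz cl by simp
      hence "a * e z = b Y0" using ae[OF zM] tz zP c0 \<beta>S[OF zP] mem_S[OF zM] by simp
      moreover have "(\<Sum>Y\<in>C. b Y) * e z = b Y0" using sumPk1[OF bS zM Y0(1)] Y0 tz bz by simp
      ultimately show ?thesis using EE_comp[OF z, of a] True c0 \<open>t * e z = _\<close> by simp
    next
      case False
      have s0: "(\<Sum>Y\<in>C. b Y) * e z = 0" using sumPk0[OF bS zM] False tz by simp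
      show ?thesis
      proof (cases "z \<in> P")
        case True
        have c0: "c * e z = 0" using vanish_g[OF QO c zM] tz True by simp
        show ?thesis using EE_comp[OF z, of a] False True c0 s0 \<open>t * e z = _\<close> by simp
      next
        case nP: False
        have "a * e z = c * e z" using ae[OF zM] tz nP by simp
        thus ?thesis using EE_comp[OF z, of a] False nP z s0 \<open>t * e z = _\<close> by simp
      qed
    qed
  qed
  thus ?thesis using aI by blast
qed

lemma part2: "\<exists>f. ring_iso_on f II TT"
proof (intro exI)
  show "ring_iso_on (\<lambda>a. a * EE) II TT"
    unfolding ring_iso_on_def bij_betw_def
  proof (intro conjI ballI)
    show "inj_on (\<lambda>a. a * EE) II" by (rule inj)
    show "(\<lambda>a. a * EE) ` II = TT" using img_sub surj by blast
  qed (simp_all add: distrib_right EE_mult)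
qed

end

theorem corollary3p4:
  fixes G :: "('g, 'b) groupoid_scheme"
    and e :: "'g \<Rightarrow> 'a::ring"
    and \<alpha> :: "'g \<Rightarrow> 'a \<Rightarrow> 'a"
    and H :: "'g set"
    and pick :: "'g set \<Rightarrow> 'g"
  assumes "is_groupoid G"
    and "finite (mor G)"
    and "connected_groupoid G"
    and "unital_partial_action G e \<alpha>"
    and "group_type_conn G e (mor G) (objs G)"
    and "internal_direct_sum (objs G) (ideal_of e) UNIV"
    and "subgroupoid H G"
    and "group_type_sub G e H"
    and "\<forall>Y\<in>component_objs G H. pick Y \<in> Y"
  shows "invariants G e \<alpha> UNIV H =
           {a + c | a c.
              a \<in> dsum (component_objs G H)
                     (\<lambda>Y. invariants G e \<alpha> (dsum Y (ideal_of e)) (component G H Y))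
            \<and> c \<in> dsum (objs G - sobjs G H) (ideal_of e)}
      \<and> (\<exists>f. ring_iso_on f (invariants G e \<alpha> UNIV H)
           {a + c | a c.
              a \<in> dsum (component_objs G H)
                     (\<lambda>Y. invariants G e \<alpha> (ideal_of e (pick Y)) (homs G H (pick Y) (pick Y)))
            \<and> c \<in> dsum (objs G - sobjs G H) (ideal_of e)})"
  proof -
  interpret sub G e \<alpha> H pick
    using assms by unfold_locales simp_all
  show ?thesis using part1 part2 by simp
qed

end
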